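(* Let $s=(s_{i,m})_{1\le i\le b,1\le m\le M}$ be a matrix with $1\ge s_{1,m}\ge s_{2,m}\ge\cdots\ge s_{b,m}\ge0$ for each $m$ and $\sum_m s_{1,m}\le1$, and put $s_i=\sum_m s_{i,m}$. Suppose $$s_1\ge\lambda+(k-\zeta-6)\Delta\quad\text{and}\quad s_{1,m}\ge\lambda v_m-\theta_m\Delta\ \ \text{for all }1\le m\le M.$$ Then $$\left(\lambda+\Delta-\sum_{m=1}^M w_m s_{1,m}\right)\mathbb I\Bigl\{\sum_{i=1}^b s_i>\lambda+k\Delta+\tfrac1N\Bigr\}\le0.$$
   Context: Parameters: integers $N\ge2$, $b\ge1$, $M\ge2$; $\lambda=1-N^{-\alpha}$ with $0<\alpha<1/2$; $\Delta=\frac{\log N}{\sqrt N}$. Coxian parameters $\mu_1,\dots,\mu_M>0$, $p_1,\dots,p_{M-1}\in[0,1)$; $v_m=\prod_{i=1}^{m-1}p_i/\mu_m$ with $\sum_mv_m=1$; $\bar v=\min_mv_m$. $w_m=(1-p_m)\mu_m$ for $m<M$ and $w_M=\mu_M$; $w_u=\max_mw_m$, $w_l=\min_mw_m$. For $2\le m\le M$: $a_m=\frac{\mu_m}{p_1\mu_1+\mu_m}$, $b_m=(1-a_m)(1+\sum_{r=m+1}^M\frac{v_r}{v_1})-\frac{a_mv_m}{v_1}$; $\xi=\sum_{m=2}^Mb_m\prod_{j=m+1}^Ma_j$ (asserted $0<\xi<1$); $C=\sqrt{\frac{2\bar v^2\log(1/\xi)}{3M+(3M+4)\log(1/\xi)}}$;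 $\theta_m=\frac{6\mu_1v_m+5(m-1)v_m}{C}$; $\zeta=\frac{4w_ub}{w_l}\bigl[(\frac1{w_l}-\frac1{w_u})\sum_m\theta_mw_m+\frac1{w_l}+6\bigr]$; $k=\frac{\sum_m\theta_mw_m}{w_u}+(1+\frac{w_l}{4w_ub})\zeta-\sum_m\theta_m$. *)

theory Defs
  imports Complex_Main
begin

text \<open>Coxian parameters: \<open>mu m\<close> for \<open>1 \<le> m \<le> M\<close>, \<open>p m\<close> for \<open>1 \<le> m \<le> M-1\<close>.\<close>

definition cox_v :: "(nat \<Rightarrow> real) \<Rightarrow> (nat \<Rightarrow> real) \<Rightarrow> nat \<Rightarrow> real" where
  "cox_v mu p m = (\<Prod>i=1..<m. p i) / mu m"

definition cox_w :: "nat \<Rightarrow> (nat \<Rightarrow> real) \<Rightarrow> (nat \<Rightarrow> real) \<Rightarrow> nat \<Rightarrow> real" where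
  "cox_w M mu p m = (if m < M then (1 - p m) * mu m else mu m)"

definition w_up :: "nat \<Rightarrow> (nat \<Rightarrow> real) \<Rightarrow> (nat \<Rightarrow> real) \<Rightarrow> real" where
  "w_up M mu p = Max (cox_w M mu p ` {1..M})"

definition w_low :: "nat \<Rightarrow> (nat \<Rightarrow> real) \<Rightarrow> (nat \<Rightarrow> real) \<Rightarrow> real" where
  "w_low M mu p = Min (cox_w M mu p ` {1..M})"

definition v_bar :: "nat \<Rightarrow> (nat \<Rightarrow> real) \<Rightarrow> (nat \<Rightarrow> real) \<Rightarrow> real" where
  "v_bar M mu p = Min (cox_v mu p ` {1..M})"

definition cox_a :: "(nat \<Rightarrow> real) \<Rightarrow> (nat \<Rightarrow> real) \<Rightarrow> nat \<Rightarrow> real" where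
  "cox_a mu p m = mu m / (p 1 * mu 1 + mu m)"

definition cox_b :: "nat \<Rightarrow> (nat \<Rightarrow> real) \<Rightarrow> (nat \<Rightarrow> real) \<Rightarrow> nat \<Rightarrow> real" where
  "cox_b M mu p m =
     (1 - cox_a mu p m) * (1 + (\<Sum>r=m+1..M. cox_v mu p r / cox_v mu p 1))
     - cox_a mu p m * cox_v mu p m / cox_v mu p 1"

definition cox_xi :: "nat \<Rightarrow> (nat \<Rightarrow> real) \<Rightarrow> (nat \<Rightarrow> real) \<Rightarrow> real" where
  "cox_xi M mu p = (\<Sum>m=2..M. cox_b M mu p m * (\<Prod>j=m+1..M. cox_a mu p j))"

definition cox_C :: "nat \<Rightarrow> (nat \<Rightarrow> real) \<Rightarrow> (nat \<Rightarrow> real) \<Rightarrow> real" where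
  "cox_C M mu p =
     sqrt (2 * (v_bar M mu p)^2 * ln (1 / cox_xi M mu p) /
           (3 * real M + (3 * real M + 4) * ln (1 / cox_xi M mu p)))"

definition cox_theta :: "nat \<Rightarrow> (nat \<Rightarrow> real) \<Rightarrow> (nat \<Rightarrow> real) \<Rightarrow> nat \<Rightarrow> real" where
  "cox_theta M mu p m =
     (6 * mu 1 * cox_v mu p m + 5 * (real m - 1) * cox_v mu p m) / cox_C M mu p"

definition cox_zeta :: "nat \<Rightarrow> nat \<Rightarrow> (nat \<Rightarrow> real) \<Rightarrow> (nat \<Rightarrow> real) \<Rightarrow> real" where
  "cox_zeta b M mu p =
     4 * w_up M mu p * real b / w_low M mu p *
     ((1 / w_low M mu p - 1 / w_up M mu p) *
        (\<Sum>m=1..M. cox_theta M mu p m * cox_w M mu p m)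
      + 1 / w_low M mu p + 6)"

definition cox_k :: "nat \<Rightarrow> nat \<Rightarrow> (nat \<Rightarrow> real) \<Rightarrow> (nat \<Rightarrow> real) \<Rightarrow> real" where
  "cox_k b M mu p =
     (\<Sum>m=1..M. cox_theta M mu p m * cox_w M mu p m) / w_up M mu p
     + (1 + w_low M mu p / (4 * w_up M mu p * real b)) * cox_zeta b M mu p
     - (\<Sum>m=1..M. cox_theta M mu p m)"

end

theory Submission
  imports Defs
begin

lemma wv_sum:
  fixes M :: nat and mu p :: "nat \<Rightarrow> real"
  assumes M: "M \<ge> 1" and mu_pos: "\<forall>m\<in>{1..M}. mu m > 0"
  shows "(\<Sum>m=1..M. cox_w M mu p m * cox_v mu p m) = 1"
proof -
  define P where "P m = (\<Prod>i=1..<m. p i)" for m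
  have a: "cox_w M mu p m * cox_v mu p m = P m - P (Suc m)" if "m \<in> {1..<M}" for m
  proof -
    have "mu m > 0" using mu_pos that by auto
    moreover have "P (Suc m) = P m * p m" using that unfolding P_def
      by (simp add: prod.atLeastLessThan_Suc)
    ultimately show ?thesis using that unfolding cox_w_def cox_v_def P_def[symmetric]
      by (simp add: field_simps)
  qed
  have b: "cox_w M mu p M * cox_v mu p M = P M"
  proof -
    have "mu M > 0" using mu_pos M by auto
    then show ?thesis unfolding cox_w_def cox_v_def P_def by simp
  qed
  have "(\<Sum>m=1..M. cox_w M mu p m * cox_v mu p m)
      = cox_w M mu p M * cox_v mu p M + (\<Sum>m=1..<M. cox_w M mu p m * cox_v mu p m)"
    using M by (simp add: sum.last_plus)
  also have "(\<Sum>m=1..<M. cox_w M mu p m * cox_v mu p m) = (\<Sum>m=1..<M. P m - P (Suc m))"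
    by (rule sum.cong) (use a in auto)
  finally have "(\<Sum>m=1..M. cox_w M mu p m * cox_v mu p m)
      = P M + (\<Sum>m=1..<M. P m - P (Suc m))" using b by simp
  also have "(\<Sum>m=1..<M. P m - P (Suc m)) = P 1 - P M"
    using sum_Suc_diff'[of 1 M "\<lambda>m. - P m"] M by simp
  also have "P 1 = 1" unfolding P_def by simp
  finally show ?thesis by simp
qed

theorem lemma13:
  fixes N b M :: nat and \<alpha> :: real
    and mu p :: "nat \<Rightarrow> real" and s :: "nat \<Rightarrow> nat \<Rightarrow> real"
  assumes N: "N \<ge> 2" and b: "b \<ge> 1" and M: "M \<ge> 2"
    and alpha: "0 < \<alpha>" "\<alpha> < 1/2"
    and mu_pos: "\<forall>m\<in>{1..M}. mu m > 0"
    and p_range: "\<forall>m\<in>{1..M-1}. 0 \<le> p m \<and> p m < 1"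
    and v_sum: "(\<Sum>m=1..M. cox_v mu p m) = 1"
    and xi: "0 < cox_xi M mu p" "cox_xi M mu p < 1"
    and s_mono: "\<forall>m\<in>{1..M}. s 1 m \<le> 1 \<and> s b m \<ge> 0 \<and>
                    (\<forall>i\<in>{1..<b}. s (i+1) m \<le> s i m)"
    and s1_sum: "(\<Sum>m=1..M. s 1 m) \<le> 1"
    and h1: "(\<Sum>m=1..M. s 1 m) \<ge> (1 - real N powr (-\<alpha>))
               + (cox_k b M mu p - cox_zeta b M mu p - 6) * (ln (real N) / sqrt (real N))"
    and h2: "\<forall>m\<in>{1..M}. s 1 m \<ge> (1 - real N powr (-\<alpha>)) * cox_v mu p m
               - cox_theta M mu p m * (ln (real N) / sqrt (real N))"
  shows "((1 - real N powr (-\<alpha>)) + ln (real N) / sqrt (real N)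
            - (\<Sum>m=1..M. cox_w M mu p m * s 1 m))
         * (if (\<Sum>i=1..b. \<Sum>m=1..M. s i m) >
               (1 - real N powr (-\<alpha>)) + cox_k b M mu p * (ln (real N) / sqrt (real N))
               + 1 / real N
            then 1 else 0) \<le> 0"
proof -
  define L where "L = 1 - real N powr (-\<alpha>)"
  define D where "D = ln (real N) / sqrt (real N)"
  define w where "w = cox_w M mu p"
  define v where "v = cox_v mu p"
  define th where "th = cox_theta M mu p"
  define wl where "wl = w_low M mu p"
  define wu where "wu = w_up M mu p"
  define T where "T = (\<Sum>m=1..M. th m * w m)"
  define S where "S = (\<Sum>m=1..M. th m)"
  have D0: "D \<ge> 0" unfolding D_def using N by simp
  have wpos: "w m > 0" if "m \<in> {1..M}" for m
  proof (cases "m < M")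
    case True
    then have "p m < 1" using p_range that by auto
    then show ?thesis using True mu_pos that unfolding w_def cox_w_def by auto
  next
    case False
    then show ?thesis using mu_pos that unfolding w_def cox_w_def by auto
  qed
  have fin: "finite (w ` {1..M})" "w ` {1..M} \<noteq> {}" using M by auto
  have wl_le: "wl \<le> w m" if "m \<in> {1..M}" for m
    unfolding wl_def w_low_def w_def[symmetric] using fin that by simp
  have wl_pos: "wl > 0"
    unfolding wl_def w_low_def w_def[symmetric] using fin wpos by (auto simp: Min_gr_iff)
  have wu_pos: "wu > 0"
  proof -
    have "w 1 \<le> wu" unfolding wu_def w_up_def w_def[symmetric] using fin M by simp
    moreover have "w 1 > 0" using wpos M by simp
    ultimately show ?thesis by simp
  qed
  have wv: "(\<Sum>m=1..M. w m * v m) = 1" unfolding w_def v_def using wv_sum M mu_pos by simp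
  define e where "e m = s 1 m - L * v m + th m * D" for m
  have e0: "e m \<ge> 0" if "m \<in> {1..M}" for m
  proof -
    have "s 1 m \<ge> L * v m - th m * D" using h2 that unfolding L_def D_def v_def th_def by blast
    then show ?thesis unfolding e_def by simp
  qed
  have A1: "(\<Sum>m=1..M. w m * s 1 m) = (\<Sum>m=1..M. L * (w m * v m) - D * (th m * w m) + w m * e m)"
    by (rule sum.cong) (auto simp: e_def algebra_simps)
  also have "\<dots> = L - D * T + (\<Sum>m=1..M. w m * e m)"
    using wv by (simp add: sum.distrib sum_subtractf sum_distrib_left[symmetric] T_def)
  finally have A1': "(\<Sum>m=1..M. w m * s 1 m) = L - D * T + (\<Sum>m=1..M. w m * e m)" .
  have A2: "(\<Sum>m=1..M. w m * e m) \<ge> (\<Sum>m=1..M. wl * e m)"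
    by (rule sum_mono) (use wl_le e0 in \<open>auto intro: mult_right_mono\<close>)
  have A3: "(\<Sum>m=1..M. wl * e m) = wl * ((\<Sum>m=1..M. s 1 m) - L + D * S)"
  proof -
    have "(\<Sum>m=1..M. e m) = (\<Sum>m=1..M. s 1 m) - L * (\<Sum>m=1..M. v m) + D * S"
      unfolding e_def S_def
      by (simp add: sum.distrib sum_subtractf sum_distrib_left mult.commute)
    then show ?thesis using v_sum unfolding v_def by (simp add: sum_distrib_left[symmetric])
  qed
  have A: "(\<Sum>m=1..M. w m * s 1 m) \<ge> L - D * T + wl * ((\<Sum>m=1..M. s 1 m) - L + D * S)"
    using A1' A2 A3 by linarith
  have h1': "(\<Sum>m=1..M. s 1 m) - L + D * S \<ge> (cox_k b M mu p - cox_zeta b M mu p - 6 + S) * D"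
  proof -
    have "(\<Sum>m=1..M. s 1 m) \<ge> L + (cox_k b M mu p - cox_zeta b M mu p - 6) * D"
      using h1 unfolding L_def D_def .
    then show ?thesis by (simp add: algebra_simps)
  qed
  have key: "wl * (cox_k b M mu p - cox_zeta b M mu p - 6 + S) = T + 1"
    unfolding cox_k_def cox_zeta_def wl_def[symmetric] wu_def[symmetric] th_def[symmetric]
      w_def[symmetric] T_def[symmetric] S_def[symmetric]
    using wl_pos wu_pos b by (simp add: field_simps)
  have B1: "wl * ((\<Sum>m=1..M. s 1 m) - L + D * S) \<ge> wl * ((cox_k b M mu p - cox_zeta b M mu p - 6 + S) * D)"
    using h1' wl_pos by (simp add: mult_left_mono)
  have B2: "wl * ((cox_k b M mu p - cox_zeta b M mu p - 6 + S) * D) = (T + 1) * D"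
    using key by (simp add: mult.assoc[symmetric])
  have "(\<Sum>m=1..M. w m * s 1 m) \<ge> L + D" using A B1 B2 by (simp add: algebra_simps)
  then have "L + D - (\<Sum>m=1..M. w m * s 1 m) \<le> 0" by simp
  then show ?thesis unfolding L_def[symmetric] D_def[symmetric] w_def[symmetric] by simp
qed

end
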